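(* There is a constant $c>0$ such that the following holds. Let $f:\mathbb{N}\to\mathbb{R}_{\ge 0}$ and suppose a comparison-based predecessor search algorithm on a sorted array $A$ of size $n$ has the property that, for every sequence of predecessor searches $x_1,\dots,x_m$ and every $y\in A$, the amortized number of comparisons involving $y$ caused by search $x_i$ is at most $f(d(x_i,y))$ (i.e., the total number of comparisons involving $y$ over the sequence is, up to an additive term independent of $m$, at most $\sum_{i=1}^m f(d(x_i,y))$). Then $\sum_{k=1}^{p} f(k)\ge c\log p$ for all $p\le n$.
   Context: A predecessor search with query $x$ in a sorted array $A=A[0],\dots,A[n-1]$ returns the index of the largest element of $A$ smaller than $x$. For a query $x$ and $y\in A$, $d(x,y)$ denotes the number of elements of $A$ between $x$ and $y$ in $A$, inclusive. An element participates in a comparison if it is one of the two elements compared. *)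

theory Defs
  imports Complex_Main
begin

text \<open>Model of a deterministic comparison-based predecessor search algorithm on a
sorted array A (a real list).
The decision tree used for the current search may depend arbitrarily on the
history (answers and comparison transcripts) of all previous searches, which
models self-adjusting / amortized data structures.\<close>

datatype cmp = LT | EQ | GT

datatype dtree = Ans "nat option" | Cmp nat dtree dtree dtree

fun run :: "real list \<Rightarrow> dtree \<Rightarrow> real \<Rightarrow> nat option \<times> (nat \<times> cmp) list" where
  "run A (Ans r) x = (r, [])"
| "run A (Cmp j l e g) x =
     (if x < A ! j then (case run A l x of (r, t) \<Rightarrow> (r, (j, LT) # t))
      else if x = A ! j then (case run A e x of (r, t) \<Rightarrow> (r, (j, EQ) # t))
      else (case run A g x of (r, t) \<Rightarrow> (r, (j, GT) # t)))"

type_synonym history = "(nat option \<times> (nat \<times> cmp) list) list"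
type_synonym algorithm = "history \<Rightarrow> dtree"

fun exec :: "algorithm \<Rightarrow> real list \<Rightarrow> history \<Rightarrow> real list \<Rightarrow> history" where
  "exec alg A h [] = h"
| "exec alg A h (x # xs) = exec alg A (h @ [run A (alg h) x]) xs"

definition searches :: "algorithm \<Rightarrow> real list \<Rightarrow> real list \<Rightarrow> history" where
  "searches alg A xs = exec alg A [] xs"

definition pred_idx :: "real list \<Rightarrow> real \<Rightarrow> nat option" where
  "pred_idx A x = (if \<exists>i<length A. A ! i < x
                   then Some (GREATEST i. i < length A \<and> A ! i < x) else None)"

definition valid_pred_alg :: "algorithm \<Rightarrow> real list \<Rightarrow> bool" where
  "valid_pred_alg alg A \<longleftrightarrow>
     (\<forall>xs. \<forall>i<length xs.
        fst (searches alg A xs ! i) = pred_idx A (xs ! i) \<and>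
        (\<forall>jc\<in>set (snd (searches alg A xs ! i)). fst jc < length A))"

definition comps_with :: "algorithm \<Rightarrow> real list \<Rightarrow> real list \<Rightarrow> nat \<Rightarrow> nat" where
  "comps_with alg A xs k =
     (\<Sum>s\<leftarrow>searches alg A xs. length (filter (\<lambda>jc. fst jc = k) (snd s)))"

definition arr_dist :: "real list \<Rightarrow> real \<Rightarrow> nat \<Rightarrow> nat" where
  "arr_dist A x k = card {i. i < length A \<and> min x (A ! k) \<le> A ! i \<and> A ! i \<le> max x (A ! k)}"

end

theory Submission
  imports Defs
begin

definition cnt :: "nat \<Rightarrow> (nat \<times> cmp) list \<Rightarrow> nat" where
  "cnt p t = length (filter (\<lambda>jc. fst jc < p) t)"

lemma sum_filter: "(\<Sum>k<p. length (filter (\<lambda>jc. fst jc = k) t)) = cnt p t"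
  unfolding cnt_def
proof (induction t)
  case Nil then show ?case by simp
next
  case (Cons a t)
  have "(\<Sum>k<p. length (filter (\<lambda>jc. fst jc = k) (a # t))) =
        (\<Sum>k<p. (if fst a = k then 1 else 0) + length (filter (\<lambda>jc. fst jc = k) t))"
    by (rule sum.cong) auto
  also have "\<dots> = (\<Sum>k<p. (if fst a = k then 1 else 0)) + (\<Sum>k<p. length (filter (\<lambda>jc. fst jc = k) t))"
    by (rule sum.distrib)
  also have "(\<Sum>k<p. (if fst a = k then 1 else 0::nat)) = (if fst a < p then 1 else 0)"
    by (simp add: sum.delta)
  finally show ?case using Cons by simp
qed

lemma exec_len: "length (exec alg A h xs) = length h + length xs"
  by (induction xs arbitrary: h) auto

lemma exec_snoc: "exec alg A h (xs @ [x]) = exec alg A h xs @ [run A (alg (exec alg A h xs)) x]"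
  by (induction xs arbitrary: h) auto

lemma searches_snoc: "searches alg A (xs @ [x]) = searches alg A xs @ [run A (alg (searches alg A xs)) x]"
  unfolding searches_def by (rule exec_snoc)

lemma searches_len: "length (searches alg A xs) = length xs"
  unfolding searches_def by (simp add: exec_len)

lemma comps_snoc: "comps_with alg A (xs @ [x]) k = comps_with alg A xs k +
   length (filter (\<lambda>jc. fst jc = k) (snd (run A (alg (searches alg A xs)) x)))"
  unfolding comps_with_def by (simp add: searches_snoc)

lemma le_iff: "sorted_wrt (<) (A::real list) \<Longrightarrow> a < length A \<Longrightarrow> b < length A \<Longrightarrow> (A!a \<le> A!b) = (a \<le> b)"
proof -
  assume s: "sorted_wrt (<) A" and a: "a < length A" and b: "b < length A"
  have lt: "\<And>u v. u < v \<Longrightarrow> v < length A \<Longrightarrow> A!u < A!v"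
    using s by (simp add: sorted_wrt_iff_nth_less)
  show ?thesis
  proof (cases a b rule: linorder_cases)
    case less then show ?thesis using lt[OF less b] by simp
  next
    case equal then show ?thesis by simp
  next
    case greater then show ?thesis using lt[OF greater a] by simp
  qed
qed

lemma lt_iff: "sorted_wrt (<) (A::real list) \<Longrightarrow> a < length A \<Longrightarrow> b < length A \<Longrightarrow> (A!a < A!b) = (a < b)"
  using le_iff[of A b a] by (meson not_le)

lemma pred_nth: assumes s: "sorted_wrt (<) A" and i: "i < length A"
  shows "pred_idx A (A!i) = (if i = 0 then None else Some (i-1))"
proof -
  have ex: "(\<exists>j<length A. A!j < A!i) = (0 < i)"
  proof
    assume "\<exists>j<length A. A!j < A!i"
    then show "0 < i" using lt_iff[OF s _ i] by auto
  next
    assume "0 < i"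
    then have "0 < length A \<and> A!0 < A!i" using lt_iff[OF s _ i, of 0] i by (cases A) auto
    then show "\<exists>j<length A. A!j < A!i" by blast
  qed
  have g: "0 < i \<Longrightarrow> (GREATEST j. j < length A \<and> A!j < A!i) = i - 1"
    by (rule Greatest_equality) (use lt_iff[OF s _ i] i in auto)
  show ?thesis unfolding pred_idx_def using ex g by auto
qed

lemma run_LT: "x < A!j \<Longrightarrow> run A (Cmp j l e g) x = (fst (run A l x), (j,LT) # snd (run A l x))"
  by (simp split: prod.split)
lemma run_EQ: "x = A!j \<Longrightarrow> run A (Cmp j l e g) x = (fst (run A e x), (j,EQ) # snd (run A e x))"
  by (simp split: prod.split)
lemma run_GT: "\<not> x < A!j \<Longrightarrow> x \<noteq> A!j \<Longrightarrow> run A (Cmp j l e g) x = (fst (run A g x), (j,GT) # snd (run A g x))"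
  by (simp split: prod.split)

lemma arr_dist_nth: assumes s: "sorted_wrt (<) A" and j: "j < length A" and k: "k < length A"
  shows "arr_dist A (A!j) k = (if j \<le> k then k - j + 1 else j - k + 1)"
proof (cases "j \<le> k")
  case True
  then have "A!j \<le> A!k" using le_iff[OF s j k] by simp
  then have "{i. i < length A \<and> min (A!j) (A!k) \<le> A ! i \<and> A ! i \<le> max (A!j) (A!k)} = {j..k}"
    using le_iff[OF s] j k by (auto simp: min_def max_def)
  then show ?thesis using True by (simp add: arr_dist_def)
next
  case False
  then have "A!k \<le> A!j" using le_iff[OF s k j] by simp
  then have "{i. i < length A \<and> min (A!j) (A!k) \<le> A ! i \<and> A ! i \<le> max (A!j) (A!k)} = {k..j}"
    using le_iff[OF s] j k by (auto simp: min_def max_def)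
  then show ?thesis using False by (simp add: arr_dist_def)
qed


lemma key:
  assumes s: "sorted_wrt (<) (A::real list)" and pl: "p \<le> length A"
  shows "I \<subseteq> {..<p} \<Longrightarrow> I \<noteq> {} \<Longrightarrow> inj_on (\<lambda>i. fst (run A T (A!i))) I \<Longrightarrow>
     (\<forall>i\<in>I. \<forall>jc\<in>set (snd (run A T (A!i))). fst jc < length A) \<Longrightarrow>
     \<exists>i\<in>I. card I \<le> 3 ^ cnt p (snd (run A T (A!i)))"
proof (induction T arbitrary: I)
  case (Ans r)
  have fin: "finite I" using Ans.prems(1) finite_subset by blast
  have "card I \<le> Suc 0" using Ans.prems(3) fin
    by (auto simp: card_le_Suc0_iff_eq inj_on_def)
  then show ?case using Ans.prems(2) by (auto simp: cnt_def)
next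
  case (Cmp j l e g)
  have fin: "finite I" using Cmp.prems(1) finite_subset by blast
  obtain i0 where i0: "i0 \<in> I" using Cmp.prems(2) by blast
  have "\<exists>oc. (j, oc) \<in> set (snd (run A (Cmp j l e g) (A!i0)))"
    by (auto split: prod.split)
  then have jlen: "j < length A" using Cmp.prems(4) i0 by fastforce
  have IHall: "\<And>T' I'. T' \<in> {l,e,g} \<Longrightarrow> I' \<subseteq> {..<p} \<Longrightarrow> I' \<noteq> {} \<Longrightarrow>
     inj_on (\<lambda>i. fst (run A T' (A!i))) I' \<Longrightarrow>
     (\<forall>i\<in>I'. \<forall>jc\<in>set (snd (run A T' (A!i))). fst jc < length A) \<Longrightarrow>
     \<exists>i\<in>I'. card I' \<le> 3 ^ cnt p (snd (run A T' (A!i)))"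
    using Cmp.IH by blast
  have gen: "\<exists>i\<in>I. card I \<le> 3 ^ cnt p (snd (run A (Cmp j l e g) (A!i)))"
    if T': "T' \<in> {l,e,g}" and I': "I' \<subseteq> I" "I' \<noteq> {}"
      and cI: "card I \<le> (if p \<le> j then 1 else 3) * card I'"
      and rr: "\<forall>i\<in>I'. \<exists>oc. run A (Cmp j l e g) (A!i) = (fst (run A T' (A!i)), (j,oc) # snd (run A T' (A!i)))"
    for T' I'
  proof -
    have "inj_on (\<lambda>i. fst (run A (Cmp j l e g) (A!i))) I'"
      using Cmp.prems(3) I'(1) inj_on_subset by blast
    then have inj: "inj_on (\<lambda>i. fst (run A T' (A!i))) I'"
      by (rule inj_on_cong[THEN iffD1, rotated]) (use rr in force)
    have val: "\<forall>i\<in>I'. \<forall>jc\<in>set (snd (run A T' (A!i))). fst jc < length A"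
    proof (intro ballI)
      fix i jc assume i: "i \<in> I'" and jc: "jc \<in> set (snd (run A T' (A!i)))"
      obtain oc where "run A (Cmp j l e g) (A!i) = (fst (run A T' (A!i)), (j,oc) # snd (run A T' (A!i)))"
        using rr i by blast
      then have "jc \<in> set (snd (run A (Cmp j l e g) (A!i)))" using jc by simp
      then show "fst jc < length A" using Cmp.prems(4) i I'(1) by blast
    qed
    obtain i where i: "i \<in> I'" and ci: "card I' \<le> 3 ^ cnt p (snd (run A T' (A!i)))"
      using IHall[OF T' _ I'(2) inj val] I'(1) Cmp.prems(1) by blast
    obtain oc where ro: "run A (Cmp j l e g) (A!i) = (fst (run A T' (A!i)), (j,oc) # snd (run A T' (A!i)))"
      using rr i by blast
    have "card I \<le> 3 ^ cnt p (snd (run A (Cmp j l e g) (A!i)))"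
    proof (cases "p \<le> j")
      case True
      then show ?thesis using ro cI ci by (simp add: cnt_def)
    next
      case False
      then have "card I \<le> 3 * card I'" using cI by simp
      also have "\<dots> \<le> 3 * 3 ^ cnt p (snd (run A T' (A!i)))" using ci by simp
      finally show ?thesis using ro False by (simp add: cnt_def)
    qed
    then show ?thesis using i I'(1) by blast
  qed
  show ?case
  proof (cases "p \<le> j")
    case True
    have "\<forall>i\<in>I. A!i < A!j" using Cmp.prems(1) True jlen pl lt_iff[OF s] by fastforce
    then show ?thesis
      by (intro gen[of l I]) (use Cmp.prems(2) True run_LT in auto)
  next
    case False
    define I1 where "I1 = {i\<in>I. A!i < A!j}"
    define I2 where "I2 = {i\<in>I. A!i = A!j}"
    define I3 where "I3 = {i\<in>I. \<not> A!i < A!j \<and> A!i \<noteq> A!j}"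
    have "I = I1 \<union> I2 \<union> I3" unfolding I1_def I2_def I3_def by blast
    then have "card I \<le> card I1 + card I2 + card I3"
      by (metis card_Un_le add_le_mono1 order_trans)
    then have "card I \<le> 3 * card I1 \<or> card I \<le> 3 * card I2 \<or> card I \<le> 3 * card I3"
      by linarith
    moreover have "card I \<noteq> 0" using fin Cmp.prems(2) by simp
    ultimately show ?thesis
    proof (elim disjE)
      assume c: "card I \<le> 3 * card I1"
      then have "I1 \<noteq> {}" using \<open>card I \<noteq> 0\<close> by auto
      then show ?thesis using c False
        by (intro gen[of l I1]) (auto simp: I1_def split: prod.split)
    next
      assume c: "card I \<le> 3 * card I2"
      then have "I2 \<noteq> {}" using \<open>card I \<noteq> 0\<close> by auto
      then show ?thesis using c False
        by (intro gen[of e I2]) (auto simp: I2_def split: prod.split)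
    next
      assume c: "card I \<le> 3 * card I3"
      then have "I3 \<noteq> {}" using \<open>card I \<noteq> 0\<close> by auto
      then show ?thesis using c False
        by (intro gen[of g I3]) (auto simp: I3_def split: prod.split)
    qed
  qed
qed



lemma dist_sum:
  assumes s: "sorted_wrt (<) (A::real list)" and pl: "p \<le> length A" and j: "j < p"
    and f0: "\<forall>k. f k \<ge> (0::real)"
  shows "(\<Sum>k<p. f (arr_dist A (A!j) k)) \<le> 2 * (\<Sum>k=1..p. f k)"
proof -
  have un: "{..<p} = {..<j} \<union> {j..<p}" using j by auto
  have "(\<Sum>k<p. f (arr_dist A (A!j) k)) = (\<Sum>k<j. f (arr_dist A (A!j) k)) + (\<Sum>k\<in>{j..<p}. f (arr_dist A (A!j) k))"
    unfolding un by (rule sum.union_disjoint) auto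
  also have "(\<Sum>k<j. f (arr_dist A (A!j) k)) = (\<Sum>k<j. f (j - k + 1))"
    by (rule sum.cong) (use arr_dist_nth[OF s] j pl in auto)
  also have "\<dots> = (\<Sum>d\<in>(\<lambda>k. j - k + 1) ` {..<j}. f d)"
    by (subst sum.reindex) (auto simp: inj_on_def)
  also have "\<dots> \<le> (\<Sum>k=1..p. f k)"
    by (rule sum_mono2) (use f0 j in auto)
  also have "(\<Sum>k\<in>{j..<p}. f (arr_dist A (A!j) k)) = (\<Sum>k\<in>{j..<p}. f (k - j + 1))"
    by (rule sum.cong) (use arr_dist_nth[OF s] j pl in auto)
  also have "\<dots> = (\<Sum>d\<in>(\<lambda>k. k - j + 1) ` {j..<p}. f d)"
    by (subst sum.reindex) (auto simp: inj_on_def)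
  also have "\<dots> \<le> (\<Sum>k=1..p. f k)"
    by (rule sum_mono2) (use f0 j in auto)
  finally show ?thesis by simp
qed

lemma main:
  assumes f0: "\<forall>k. f k \<ge> (0::real)" and s: "sorted_wrt (<) (A::real list)"
    and v: "valid_pred_alg alg A"
    and C: "\<forall>xs. \<forall>k<length A.
          real (comps_with alg A xs k) \<le> C + (\<Sum>i<length xs. f (arr_dist A (xs ! i) k))"
    and p1: "1 \<le> p" and pl: "p \<le> length A"
  shows "1/4 * log 2 (real p) \<le> (\<Sum>k=1..p. f k)"
proof -
  define S where "S = (\<Sum>k=1..p. f k)"
  define t where "t = (LEAST n. p \<le> 3 ^ n)"
  have per: "\<exists>i<p. t \<le> cnt p (snd (run A (alg (searches alg A xs)) (A!i)))" for xs
  proof -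
    let ?h = "searches alg A xs"
    have sn: "searches alg A (xs @ [A!i]) ! length xs = run A (alg ?h) (A!i)" for i
      by (simp add: searches_snoc nth_append searches_len)
    have vi: "fst (run A (alg ?h) (A!i)) = pred_idx A (A!i) \<and>
        (\<forall>jc\<in>set (snd (run A (alg ?h) (A!i))). fst jc < length A)" for i
    proof -
      have h: "\<forall>j<length (xs @ [A!i]).
        fst (searches alg A (xs @ [A!i]) ! j) = pred_idx A ((xs @ [A!i]) ! j) \<and>
        (\<forall>jc\<in>set (snd (searches alg A (xs @ [A!i]) ! j)). fst jc < length A)"
        using v unfolding valid_pred_alg_def by blast
      show ?thesis using h[rule_format, of "length xs"] sn[of i] by simp
    qed
    have inj: "inj_on (\<lambda>i. fst (run A (alg ?h) (A!i))) {..<p}"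
      unfolding inj_on_def
    proof (intro ballI impI)
      fix a b assume a: "a \<in> {..<p}" and b: "b \<in> {..<p}"
        and e: "fst (run A (alg ?h) (A!a)) = fst (run A (alg ?h) (A!b))"
      then have "pred_idx A (A!a) = pred_idx A (A!b)" using vi by metis
      then show "a = b" using pred_nth[OF s, of a] pred_nth[OF s, of b] pl a b
        by (auto split: if_splits)
    qed
    have "\<exists>i\<in>{..<p}. card {..<p} \<le> 3 ^ cnt p (snd (run A (alg ?h) (A!i)))"
      by (rule key[OF s pl]) (use inj vi p1 in \<open>auto simp: lessThan_empty_iff\<close>)
    then obtain i where i: "i < p" and ci: "card {..<p} \<le> 3 ^ cnt p (snd (run A (alg ?h) (A!i)))"
      by blast
    have "t \<le> cnt p (snd (run A (alg ?h) (A!i)))"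
      unfolding t_def by (rule Least_le) (use ci in simp)
    then show ?thesis using i by blast
  qed
  have seq: "\<exists>xs. length xs = m \<and> (\<forall>x\<in>set xs. \<exists>i<p. x = A!i) \<and>
      m * t \<le> (\<Sum>k<p. comps_with alg A xs k)" for m
  proof (induction m)
    case 0
    then show ?case by (intro exI[of _ "[]"]) simp
  next
    case (Suc m)
    then obtain xs where xs: "length xs = m" "\<forall>x\<in>set xs. \<exists>i<p. x = A!i"
      "m * t \<le> (\<Sum>k<p. comps_with alg A xs k)" by blast
    obtain i where i: "i < p" "t \<le> cnt p (snd (run A (alg (searches alg A xs)) (A!i)))"
      using per by blast
    have "(\<Sum>k<p. comps_with alg A (xs @ [A!i]) k) = (\<Sum>k<p. comps_with alg A xs k) +
       cnt p (snd (run A (alg (searches alg A xs)) (A!i)))"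
      by (simp add: comps_snoc sum.distrib sum_filter)
    then have "Suc m * t \<le> (\<Sum>k<p. comps_with alg A (xs @ [A!i]) k)"
      using xs(3) i(2) by simp
    then show ?case using xs i by (intro exI[of _ "xs @ [A!i]"]) auto
  qed
  have bound: "real m * real t \<le> real p * C + real m * (2 * S)" for m
  proof -
    obtain xs where xs: "length xs = m" "\<forall>x\<in>set xs. \<exists>i<p. x = A!i"
      "m * t \<le> (\<Sum>k<p. comps_with alg A xs k)" using seq by blast
    have "real m * real t \<le> (\<Sum>k<p. real (comps_with alg A xs k))"
      using xs(3) by (metis of_nat_le_iff of_nat_mult of_nat_sum)
    also have "\<dots> \<le> (\<Sum>k<p. C + (\<Sum>i<m. f (arr_dist A (xs ! i) k)))"
      by (rule sum_mono) (use C pl xs(1) in auto)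
    also have "\<dots> = real p * C + (\<Sum>i<m. \<Sum>k<p. f (arr_dist A (xs ! i) k))"
      by (simp add: sum.distrib sum.swap[of _ "{..<p}"])
    also have "(\<Sum>i<m. \<Sum>k<p. f (arr_dist A (xs ! i) k)) \<le> (\<Sum>i<m. 2 * S)"
    proof (rule sum_mono)
      fix i assume "i \<in> {..<m}"
      then have "xs ! i \<in> set xs" using xs(1) by simp
      then obtain j where "j < p" "xs ! i = A!j" using xs(2) by blast
      then show "(\<Sum>k<p. f (arr_dist A (xs ! i) k)) \<le> 2 * S"
        using dist_sum[OF s pl _ f0] unfolding S_def by simp
    qed
    finally show ?thesis by simp
  qed
  have tS: "real t \<le> 2 * S"
  proof (rule ccontr)
    assume "\<not> real t \<le> 2 * S"
    then have d: "real t - 2 * S > 0" by simp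
    obtain m where m: "real p * C / (real t - 2 * S) < real m" using reals_Archimedean2 by blast
    then have "real p * C < real m * (real t - 2 * S)" using d by (simp add: field_simps)
    then show False using bound[of m] by (simp add: algebra_simps)
  qed
  have "p \<le> 3 ^ t" unfolding t_def by (rule LeastI[of _ p]) (simp add: less_imp_le)
  then have "real p \<le> (3::real) ^ t" by (metis of_nat_le_iff of_nat_numeral of_nat_power)
  then have "log 2 (real p) \<le> log 2 (3 ^ t)"
    by (subst log_le_cancel_iff) (use p1 in auto)
  also have "\<dots> = real t * log 2 3" by (simp add: log_nat_power)
  also have "\<dots> \<le> real t * 2"
  proof -
    have "log 2 3 \<le> log 2 (4::real)" by (subst log_le_cancel_iff) auto
    also have "log 2 (4::real) = 2" using log_pow_cancel[of "2::real" 2] by simp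
    finally show ?thesis by (simp add: mult_left_mono)
  qed
  finally show ?thesis using tS unfolding S_def by simp
qed

theorem theorem3:
  shows "\<exists>c::real. c > 0 \<and>
    (\<forall>(f::nat \<Rightarrow> real) (A::real list) (alg::algorithm).
      (\<forall>k. f k \<ge> 0) \<and> sorted_wrt (<) A \<and> valid_pred_alg alg A \<and>
      (\<exists>C::real. \<forall>xs. \<forall>k<length A.
          real (comps_with alg A xs k) \<le> C + (\<Sum>i<length xs. f (arr_dist A (xs ! i) k)))
      \<longrightarrow> (\<forall>p. 1 \<le> p \<and> p \<le> length A \<longrightarrow> (\<Sum>k=1..p. f k) \<ge> c * log 2 (real p)))"
proof (rule exI[of _ "1/4"], intro conjI)
  show "(0::real) < 1/4" by simp
  show "\<forall>(f::nat \<Rightarrow> real) (A::real list) (alg::algorithm).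
      (\<forall>k. f k \<ge> 0) \<and> sorted_wrt (<) A \<and> valid_pred_alg alg A \<and>
      (\<exists>C::real. \<forall>xs. \<forall>k<length A.
          real (comps_with alg A xs k) \<le> C + (\<Sum>i<length xs. f (arr_dist A (xs ! i) k)))
      \<longrightarrow> (\<forall>p. 1 \<le> p \<and> p \<le> length A \<longrightarrow> (\<Sum>k=1..p. f k) \<ge> 1/4 * log 2 (real p))"
    using main by blast
qed

end
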